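(* Let $n\ge 2$, $\beta\in\partial\mathbb{D}$, $\{\alpha_j\}_{j=0}^{n-2}\in\mathbb{D}^{n-1}$. Write $P_n(z)=P_n(z;\{\alpha_j\}_{j=0}^{n-2},\beta)$, $Q_n(z)=Q_n(z;\{\alpha_j\}_{j=0}^{n-2},\beta)$, and $P_{n-1}(z)=P_{n-1}(z;\{\alpha_{j+1}\}_{j=0}^{n-3},\beta)$, $Q_{n-1}(z)=Q_{n-1}(z;\{\alpha_{j+1}\}_{j=0}^{n-3},\beta)$. Then \[ P_n=\tfrac12(z-\bar\alpha_0+1-\alpha_0z)P_{n-1}+\tfrac12(z-\bar\alpha_0-1+\alpha_0z)Q_{n-1}, \] \[ Q_n=\tfrac12(z+\bar\alpha_0+1+\alpha_0z)Q_{n-1}+\tfrac12(z+\bar\alpha_0-1-\alpha_0z)P_{n-1}. \]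
   Context: For Verblunsky coefficients $\alpha_0,\alpha_1,\dots\in\mathbb{D}$ the monic orthogonal polynomials on the unit circle satisfy $\Phi_0=1$, $\Phi_{k+1}(z)=z\Phi_k(z)-\bar\alpha_k\Phi_k^*(z)$ with $\Phi_k^*(z)=z^k\overline{\Phi_k(1/\bar z)}$; the second kind polynomials $\Psi_k$ satisfy the same recursion with each $\alpha_j$ replaced by $-\alpha_j$. For $m\ge1$ and $\beta\in\partial\mathbb{D}$, $P_m(z;\{\alpha_j\}_{j=0}^{m-2},\beta)=z\Phi_{m-1}(z)-\bar\beta\Phi_{m-1}^*(z)$ and $Q_m(z;\{\alpha_j\}_{j=0}^{m-2},\beta)=z\Psi_{m-1}(z)+\bar\beta\Psi_{m-1}^*(z)$, with $\Phi_{m-1},\Psi_{m-1}$ built from $\alpha_0,\dots,\alpha_{m-2}$. *)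

theory Defs
  imports "HOL-Complex_Analysis.Complex_Analysis" "HOL-Computational_Algebra.Polynomial"
begin

text \<open>Reversed polynomial of formal degree k: p^*(z) = z^k conj(p(1/conj z)).\<close>
definition opuc_star :: "nat \<Rightarrow> complex poly \<Rightarrow> complex poly" where
  "opuc_star k p = (\<Sum>i\<le>k. monom (cnj (coeff p (k - i))) i)"

fun Phi :: "(nat \<Rightarrow> complex) \<Rightarrow> nat \<Rightarrow> complex poly" where
  "Phi \<alpha> 0 = 1"
| "Phi \<alpha> (Suc k) = [:0, 1:] * Phi \<alpha> k - smult (cnj (\<alpha> k)) (opuc_star k (Phi \<alpha> k))"

definition Psi :: "(nat \<Rightarrow> complex) \<Rightarrow> nat \<Rightarrow> complex poly" where
  "Psi \<alpha> k = Phi (\<lambda>j. - \<alpha> j) k"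

text \<open>Paraorthogonal polynomials P_m, Q_m (only alpha_0..alpha_{m-2} are used).\<close>
definition P_para :: "nat \<Rightarrow> (nat \<Rightarrow> complex) \<Rightarrow> complex \<Rightarrow> complex poly" where
  "P_para m \<alpha> \<beta> = [:0, 1:] * Phi \<alpha> (m - 1) - smult (cnj \<beta>) (opuc_star (m - 1) (Phi \<alpha> (m - 1)))"

definition Q_para :: "nat \<Rightarrow> (nat \<Rightarrow> complex) \<Rightarrow> complex \<Rightarrow> complex poly" where
  "Q_para m \<alpha> \<beta> = [:0, 1:] * Psi \<alpha> (m - 1) + smult (cnj \<beta>) (opuc_star (m - 1) (Psi \<alpha> (m - 1)))"

end

theory Submission
  imports Defs
begin

lemma coeff_star: "coeff (opuc_star k p) i = (if i \<le> k then cnj (coeff p (k - i)) else 0)"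
  unfolding opuc_star_def by (simp add: coeff_sum coeff_monom)

lemma star_add: "opuc_star k (p + q) = opuc_star k p + opuc_star k q"
  by (simp add: poly_eq_iff coeff_star)

lemma star_diff: "opuc_star k (p - q) = opuc_star k p - opuc_star k q"
  by (simp add: poly_eq_iff coeff_star)

lemma star_minus: "opuc_star k (- p) = - opuc_star k p"
  by (simp add: poly_eq_iff coeff_star)

lemma star_smult: "opuc_star k (smult c p) = smult (cnj c) (opuc_star k p)"
  by (simp add: poly_eq_iff coeff_star)

lemma star_shift: "opuc_star (Suc k) (pCons 0 p) = opuc_star k p"
  by (auto simp add: poly_eq_iff coeff_star coeff_pCons Suc_diff_le split: nat.split)

lemma star_up: assumes "degree p \<le> k"
  shows "opuc_star (Suc k) p = pCons 0 (opuc_star k p)"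
proof -
  have "coeff p (Suc k) = 0" using assms by (simp add: coeff_eq_0)
  then show ?thesis
    by (auto simp add: poly_eq_iff coeff_star coeff_pCons Suc_diff_le split: nat.split)
qed

lemma star_star: assumes "degree p \<le> k"
  shows "opuc_star k (opuc_star k p) = p"
  using assms by (auto simp add: poly_eq_iff coeff_star coeff_eq_0)

lemma degree_star: "degree (opuc_star k p) \<le> k"
  by (rule degree_le) (simp add: coeff_star)

lemma degree_Phi: "degree (Phi a k) \<le> k"
proof (induction k)
  case 0 then show ?case by simp
next
  case (Suc k)
  have "degree ([:0,1:] * Phi a k) \<le> Suc k"
    using Suc degree_pCons_le[of 0 "Phi a k"] by simp
  moreover have "degree (smult (cnj (a k)) (opuc_star k (Phi a k))) \<le> Suc k"
    by (meson degree_smult_le degree_star le_Suc_eq order_trans)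
  ultimately show ?case by (simp add: degree_diff_le)
qed

lemma star_Phi_Suc: "opuc_star (Suc k) (Phi a (Suc k)) = opuc_star k (Phi a k) - smult (a k) ([:0,1:] * Phi a k)"
  by (simp add: star_diff star_smult star_shift star_up degree_star star_star degree_Phi)

fun F :: "(nat \<Rightarrow> complex) \<Rightarrow> nat \<Rightarrow> complex poly \<times> complex poly \<Rightarrow> complex poly \<times> complex poly" where
  "F a 0 x = x"
| "F a (Suc k) x = (case F a k x of (p, q) \<Rightarrow>
     ([:0,1:] * p - smult (cnj (a k)) q, q - smult (a k) ([:0,1:] * p)))"

lemma F_Phi: "F a k (1, 1) = (Phi a k, opuc_star k (Phi a k))"
proof (induction k)
  case 0 then show ?case by (simp add: poly_eq_iff coeff_star)
next
  case (Suc k) then show ?case by (simp add: star_diff star_smult star_shift star_up degree_star star_star degree_Phi)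
qed

lemma F_Psi: "F a k (1, -1) = (Psi a k, - opuc_star k (Psi a k))"
proof (induction k)
  case 0 then show ?case by (simp add: Psi_def poly_eq_iff coeff_star)
next
  case (Suc k) then show ?case by (simp add: Psi_def star_add star_diff star_smult star_shift star_up degree_star star_star degree_Phi)
qed

lemma F_shift: "F a (Suc k) x = F (\<lambda>j. a (Suc j)) k (F a 1 x)"
proof (induction k)
  case 0 then show ?case by simp
next
  case (Suc k)
  show ?case by (subst F.simps(2)[of a "Suc k" x], subst Suc.IH, simp)
qed

lemma F_lin: "F a k (A * u1 + B * u2, A * v1 + B * v2) =
   (case F a k (u1, v1) of (p1, q1) \<Rightarrow> case F a k (u2, v2) of (p2, q2) \<Rightarrow>
     (A * p1 + B * p2, A * q1 + B * q2))"
proof (induction k)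
  case 0 then show ?case by simp
next
  case (Suc k)
  obtain p1 q1 where 1: "F a k (u1, v1) = (p1, q1)" by (cases "F a k (u1, v1)")
  obtain p2 q2 where 2: "F a k (u2, v2) = (p2, q2)" by (cases "F a k (u2, v2)")
  show ?case using Suc 1 2 by (simp add: algebra_simps smult_add_right)
qed

theorem theorem4p3:
  fixes n :: nat and \<alpha> :: "nat \<Rightarrow> complex" and \<beta> :: complex
  assumes "n \<ge> 2" and "norm \<beta> = 1" and "\<And>j. j \<le> n - 2 \<Longrightarrow> norm (\<alpha> j) < 1"
  shows "\<forall>z. poly (P_para n \<alpha> \<beta>) z =
           (z - cnj (\<alpha> 0) + 1 - \<alpha> 0 * z) / 2 * poly (P_para (n - 1) (\<lambda>j. \<alpha> (Suc j)) \<beta>) z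
         + (z - cnj (\<alpha> 0) - 1 + \<alpha> 0 * z) / 2 * poly (Q_para (n - 1) (\<lambda>j. \<alpha> (Suc j)) \<beta>) z
       \<and> poly (Q_para n \<alpha> \<beta>) z =
           (z + cnj (\<alpha> 0) + 1 + \<alpha> 0 * z) / 2 * poly (Q_para (n - 1) (\<lambda>j. \<alpha> (Suc j)) \<beta>) z
         + (z + cnj (\<alpha> 0) - 1 - \<alpha> 0 * z) / 2 * poly (P_para (n - 1) (\<lambda>j. \<alpha> (Suc j)) \<beta>) z"
proof -
  obtain m where n: "n = Suc (Suc m)" using assms(1) by (metis add_2_eq_Suc le_Suc_ex)
  define a' where "a' = (\<lambda>j. \<alpha> (Suc j))"
  define A where "A = [:(1 - cnj (\<alpha> 0)) / 2, (1 - \<alpha> 0) / 2:]"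
  define B where "B = [:(- 1 - cnj (\<alpha> 0)) / 2, (1 + \<alpha> 0) / 2:]"
  define C where "C = [:(cnj (\<alpha> 0) - 1) / 2, (1 - \<alpha> 0) / 2:]"
  define D where "D = [:(1 + cnj (\<alpha> 0)) / 2, (1 + \<alpha> 0) / 2:]"
  define p where "p = Phi a' m"
  define ps where "ps = opuc_star m (Phi a' m)"
  define q where "q = Psi a' m"
  define qs where "qs = opuc_star m (Psi a' m)"
  have e1: "F \<alpha> 1 (1,1) = (A * 1 + B * 1, A * 1 + B * (-1))"
    by (simp add: A_def B_def poly_eq_iff coeff_pCons split: nat.split) (simp add: field_simps)
  have e2: "F \<alpha> 1 (1,-1) = (C * 1 + D * 1, C * 1 + D * (-1))"
    by (simp add: C_def D_def poly_eq_iff coeff_pCons split: nat.split) (simp add: field_simps)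
  have h1: "(Phi \<alpha> (Suc m), opuc_star (Suc m) (Phi \<alpha> (Suc m))) = (A * p + B * q, A * ps - B * qs)"
  proof -
    have "(Phi \<alpha> (Suc m), opuc_star (Suc m) (Phi \<alpha> (Suc m))) = F \<alpha> (Suc m) (1,1)"
      by (simp only: F_Phi)
    also have "\<dots> = F a' m (A * 1 + B * 1, A * 1 + B * (-1))"
      by (simp only: F_shift e1 a'_def)
    also have "\<dots> = (A * p + B * q, A * ps - B * qs)"
      by (simp only: F_lin F_Phi F_Psi p_def ps_def q_def qs_def) simp
    finally show ?thesis .
  qed
  have h2: "(Psi \<alpha> (Suc m), - opuc_star (Suc m) (Psi \<alpha> (Suc m))) = (C * p + D * q, C * ps - D * qs)"
  proof -
    have "(Psi \<alpha> (Suc m), - opuc_star (Suc m) (Psi \<alpha> (Suc m))) = F \<alpha> (Suc m) (1,-1)"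
      by (simp only: F_Psi)
    also have "\<dots> = F a' m (C * 1 + D * 1, C * 1 + D * (-1))"
      by (simp only: F_shift e2 a'_def)
    also have "\<dots> = (C * p + D * q, C * ps - D * qs)"
      by (simp only: F_lin F_Phi F_Psi p_def ps_def q_def qs_def) simp
    finally show ?thesis .
  qed
  have P1: "Phi \<alpha> (Suc m) = A * p + B * q" and P2: "opuc_star (Suc m) (Phi \<alpha> (Suc m)) = A * ps - B * qs"
    using h1 by auto
  have Q1: "Psi \<alpha> (Suc m) = C * p + D * q" and Q2: "opuc_star (Suc m) (Psi \<alpha> (Suc m)) = D * qs - C * ps"
    using h2 by (auto simp: minus_equation_iff[of "opuc_star (Suc m) (Psi \<alpha> (Suc m))"])
  have PP: "P_para n \<alpha> \<beta> = pCons 0 (A * p + B * q) - smult (cnj \<beta>) (A * ps - B * qs)"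
    unfolding P_para_def n using P1 P2 by simp
  have QQ: "Q_para n \<alpha> \<beta> = pCons 0 (C * p + D * q) + smult (cnj \<beta>) (D * qs - C * ps)"
    unfolding Q_para_def n using Q1 Q2 by simp
  have PP': "P_para (n - 1) a' \<beta> = pCons 0 p - smult (cnj \<beta>) ps"
    unfolding P_para_def n p_def ps_def by simp
  have QQ': "Q_para (n - 1) a' \<beta> = pCons 0 q + smult (cnj \<beta>) qs"
    unfolding Q_para_def n q_def qs_def by simp
  show ?thesis
  proof
    fix z
    show "poly (P_para n \<alpha> \<beta>) z =
           (z - cnj (\<alpha> 0) + 1 - \<alpha> 0 * z) / 2 * poly (P_para (n - 1) (\<lambda>j. \<alpha> (Suc j)) \<beta>) z
         + (z - cnj (\<alpha> 0) - 1 + \<alpha> 0 * z) / 2 * poly (Q_para (n - 1) (\<lambda>j. \<alpha> (Suc j)) \<beta>) z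
       \<and> poly (Q_para n \<alpha> \<beta>) z =
           (z + cnj (\<alpha> 0) + 1 + \<alpha> 0 * z) / 2 * poly (Q_para (n - 1) (\<lambda>j. \<alpha> (Suc j)) \<beta>) z
         + (z + cnj (\<alpha> 0) - 1 - \<alpha> 0 * z) / 2 * poly (P_para (n - 1) (\<lambda>j. \<alpha> (Suc j)) \<beta>) z"
    proof -
      have pA: "poly A z = (z - cnj (\<alpha> 0) + 1 - \<alpha> 0 * z) / 2" unfolding A_def by (simp add: field_simps)
      have pB: "poly B z = (z - cnj (\<alpha> 0) - 1 + \<alpha> 0 * z) / 2" unfolding B_def by (simp add: field_simps)
      have pC: "poly C z = (z + cnj (\<alpha> 0) - 1 - \<alpha> 0 * z) / 2" unfolding C_def by (simp add: field_simps)
      have pD: "poly D z = (z + cnj (\<alpha> 0) + 1 + \<alpha> 0 * z) / 2" unfolding D_def by (simp add: field_simps)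
      have ring: "\<And>a b c d x y u v w :: complex. z * (a * x + b * y) - w * (a * u - b * v) = a * (z * x - w * u) + b * (z * y + w * v)
         \<and> z * (c * x + d * y) + w * (d * v - c * u) = d * (z * y + w * v) + c * (z * x - w * u)"
        by (simp add: algebra_simps)
      show ?thesis
        unfolding a'_def[symmetric] PP QQ PP' QQ' poly_diff poly_add poly_mult poly_pCons poly_smult add_0 pA[symmetric] pB[symmetric] pC[symmetric] pD[symmetric]
        by (simp add: algebra_simps)
    qed
  qed
qed

end
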